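(* Let $M$ be a free $\mathbb{T}$-module with a finite $\mathbb{T}$-basis, $V$ its associated complex vector space, $(\cdot,\cdot)$ a bicomplex scalar product on $M$ which is hyperbolic positive and closed on $V$, $\|\cdot\|$ the norm on $M$ defined below, and $d(\widehat X,\widehat Y):=\|\widehat X-\widehat Y\|$. Then for all $\widehat X,\widehat Y\in M$: 1. $\|\widehat X\|\ge 0$; 2. $\|\widehat X\|=0\iff\widehat X=0$; 3. $\|\alpha\widehat X\|=|\alpha|\,\|\widehat X\|$ for all $\alpha\in\mathbb{C}(\mathbf{i_1})$ or $\alpha\in\mathbb{C}(\mathbf{i_2})$; 4. $\|\alpha\widehat X\|\le\sqrt2\,|\alpha|_{\mathbf 3}\,\|\widehat X\|$ for all $\alpha\in\mathbb{T}$; 5. $\|\widehat X+\widehat Y\|\le\|\widehat X\|+\|\widehat Y\|$; 6. $(M,d)$ is a metric space.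
   Context: Bicomplex numbers: $\mathbb{T}=\{z_1+z_2\mathbf{i_2}: z_1,z_2\in\mathbb{C}(\mathbf{i_1})\}$, $\mathbb{C}(\mathbf{i_k})=\{x+y\mathbf{i_k}: x,y\in\mathbb{R}\}$ ($k=1,2$), $\mathbf{i_1}^2=\mathbf{i_2}^2=-1$, $\mathbf{i_1}\mathbf{i_2}=\mathbf{i_2}\mathbf{i_1}=\mathbf{j}$, $\mathbf{j}^2=1$ (commutative). Hyperbolic numbers $\mathbb{D}=\{x+y\mathbf{j}:x,y\in\mathbb{R}\}$. Idempotents $\mathbf{e_1}=(1+\mathbf{j})/2$, $\mathbf{e_2}=(1-\mathbf{j})/2$. For $w=z_1+z_2\mathbf{i_2}$, $|w|_{\mathbf 3}=|w|=\sqrt{|z_1|^2+|z_2|^2}$ (Euclidean norm in $\mathbb{R}^4$); for $\alpha=x+y\mathbf{i_k}$, $|\alpha|=\sqrt{x^2+y^2}$. Conjugation: $(z_1+z_2\mathbf{i_2})^{\dagger_3}=\overline{z_1}-\overline{z_2}\mathbf{i_2}$. $\mathbb{D}^+=\{a\mathbf{e_1}+b\mathbf{e_2}: a,b\ge 0\}$, and $(a\mathbf{e_1}+b\mathbf{e_2})^{1/2}=\sqrt a\,\mathbf{e_1}+\sqrt b\,\mathbf{e_2}$. $M$ has $\mathbb{T}$-basis $\{\widehat m_1,\dots,\widehat m_n\}$, $V=\{\sum x_l\widehat m_l: x_l\in\mathbb{C}(\mathbf{i_1})\}$; for $\widehat X=\sum x_l\widehat m_l$ with $x_l=x_{1l}\mathbf{e_1}+x_{2l}\mathbf{e_2}$,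 $x_{kl}\in\mathbb{C}(\mathbf{i_1})$, put $\widehat X_{\mathbf{e_k}}=\sum_l x_{kl}\widehat m_l\in V$. A bicomplex scalar product is a map $(\cdot,\cdot):M\times M\to\mathbb{T}$ with: $(\widehat X,\widehat Y_1+\widehat Y_2)=(\widehat X,\widehat Y_1)+(\widehat X,\widehat Y_2)$; $(\widehat X,\alpha\widehat Y)=\alpha(\widehat X,\widehat Y)$ for $\alpha\in\mathbb{T}$; $(\widehat X,\widehat Y)=(\widehat Y,\widehat X)^{\dagger_3}$; $(\widehat X,\widehat X)=0\iff\widehat X=0$. Hyperbolic positive: $(\widehat X,\widehat X)\in\mathbb{D}^+$ for all $\widehat X$. Closed on $V$: $(\widehat X,\widehat Y)\in\mathbb{C}(\mathbf{i_1})$ for $\widehat X,\widehat Y\in V$. For $\widehat Z\in V$, $\|\widehat Z\|=(\widehat Z,\widehat Z)^{1/2}$. For $\widehat X\in M$, $\|\widehat X\|:=\big|(\widehat X,\widehat X)^{1/2}\big|=\big|\mathbf{e_1}\|\widehat X_{\mathbf{e_1}}\|+\mathbf{e_2}\|\widehat X_{\mathbf{e_2}}\|\big|=\big((\|\widehat X_{\mathbf{e_1}}\|^2+\|\widehat X_{\mathbf{e_2}}\|^2)/2\big)^{1/2}$. *)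

theory Defs
  imports Complex_Main
begin

text \<open>Bicomplex numbers z1 + z2 i2 with z1, z2 in C(i1); C(i1) is modelled by the
  Isabelle type complex (i1 = ii).\<close>
datatype bicomplex = BC (bc1: complex) (bc2: complex)

definition bc_zero :: bicomplex where "bc_zero = BC 0 0"
definition bc_add :: "bicomplex \<Rightarrow> bicomplex \<Rightarrow> bicomplex" where
  "bc_add u w = BC (bc1 u + bc1 w) (bc2 u + bc2 w)"
definition bc_minus :: "bicomplex \<Rightarrow> bicomplex \<Rightarrow> bicomplex" where
  "bc_minus u w = BC (bc1 u - bc1 w) (bc2 u - bc2 w)"
definition bc_mult :: "bicomplex \<Rightarrow> bicomplex \<Rightarrow> bicomplex" where
  "bc_mult u w = BC (bc1 u * bc1 w - bc2 u * bc2 w) (bc1 u * bc2 w + bc2 u * bc1 w)"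

definition bc_conj3 :: "bicomplex \<Rightarrow> bicomplex" where
  "bc_conj3 u = BC (cnj (bc1 u)) (- cnj (bc2 u))"

definition bc_norm :: "bicomplex \<Rightarrow> real" where
  "bc_norm u = sqrt ((cmod (bc1 u))\<^sup>2 + (cmod (bc2 u))\<^sup>2)"

text \<open>j = i1 i2, idempotents e1 = (1+j)/2, e2 = (1-j)/2.\<close>
definition bc_j :: bicomplex where "bc_j = BC 0 \<i>"
definition bc_e1 :: bicomplex where "bc_e1 = BC (1/2) (\<i>/2)"
definition bc_e2 :: bicomplex where "bc_e2 = BC (1/2) (-\<i>/2)"

definition bc_of_real :: "real \<Rightarrow> bicomplex" where "bc_of_real r = BC (complex_of_real r) 0"

definition bc_hyp :: "real \<Rightarrow> real \<Rightarrow> bicomplex" where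
  "bc_hyp a b = bc_add (bc_mult (bc_of_real a) bc_e1) (bc_mult (bc_of_real b) bc_e2)"

definition bc_Dplus :: "bicomplex set" where
  "bc_Dplus = {w. \<exists>a b. a \<ge> 0 \<and> b \<ge> 0 \<and> w = bc_hyp a b}"

definition bc_Dsqrt :: "bicomplex \<Rightarrow> bicomplex" where
  "bc_Dsqrt w = (THE s. \<exists>a b. a \<ge> 0 \<and> b \<ge> 0 \<and> w = bc_hyp a b \<and> s = bc_hyp (sqrt a) (sqrt b))"

text \<open>The free T-module M with finite basis indexed by the finite type 'n:
  elements are coordinate functions 'n => bicomplex (X = sum_l x_l m_l).\<close>
definition mod_add :: "('n \<Rightarrow> bicomplex) \<Rightarrow> ('n \<Rightarrow> bicomplex) \<Rightarrow> ('n \<Rightarrow> bicomplex)" where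
  "mod_add X Y = (\<lambda>l. bc_add (X l) (Y l))"
definition mod_minus :: "('n \<Rightarrow> bicomplex) \<Rightarrow> ('n \<Rightarrow> bicomplex) \<Rightarrow> ('n \<Rightarrow> bicomplex)" where
  "mod_minus X Y = (\<lambda>l. bc_minus (X l) (Y l))"
definition mod_scale :: "bicomplex \<Rightarrow> ('n \<Rightarrow> bicomplex) \<Rightarrow> ('n \<Rightarrow> bicomplex)" where
  "mod_scale \<alpha> X = (\<lambda>l. bc_mult \<alpha> (X l))"
definition mod_zero :: "'n \<Rightarrow> bicomplex" where "mod_zero = (\<lambda>l. bc_zero)"

definition mod_V :: "('n \<Rightarrow> bicomplex) set" where
  "mod_V = {X. \<forall>l. bc2 (X l) = 0}"

definition bicomplex_scalar_product ::
  "(('n \<Rightarrow> bicomplex) \<Rightarrow> ('n \<Rightarrow> bicomplex) \<Rightarrow> bicomplex) \<Rightarrow> bool" where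
  "bicomplex_scalar_product sp \<longleftrightarrow>
     (\<forall>X Y1 Y2. sp X (mod_add Y1 Y2) = bc_add (sp X Y1) (sp X Y2)) \<and>
     (\<forall>X Y \<alpha>. sp X (mod_scale \<alpha> Y) = bc_mult \<alpha> (sp X Y)) \<and>
     (\<forall>X Y. sp X Y = bc_conj3 (sp Y X)) \<and>
     (\<forall>X. sp X X = bc_zero \<longleftrightarrow> X = mod_zero)"

definition hyperbolic_positive ::
  "(('n \<Rightarrow> bicomplex) \<Rightarrow> ('n \<Rightarrow> bicomplex) \<Rightarrow> bicomplex) \<Rightarrow> bool" where
  "hyperbolic_positive sp \<longleftrightarrow> (\<forall>X. sp X X \<in> bc_Dplus)"

definition closed_on_V ::
  "(('n \<Rightarrow> bicomplex) \<Rightarrow> ('n \<Rightarrow> bicomplex) \<Rightarrow> bicomplex) \<Rightarrow> bool" where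
  "closed_on_V sp \<longleftrightarrow> (\<forall>X\<in>mod_V. \<forall>Y\<in>mod_V. bc2 (sp X Y) = 0)"

definition mod_norm ::
  "(('n \<Rightarrow> bicomplex) \<Rightarrow> ('n \<Rightarrow> bicomplex) \<Rightarrow> bicomplex) \<Rightarrow> ('n \<Rightarrow> bicomplex) \<Rightarrow> real" where
  "mod_norm sp X = bc_norm (bc_Dsqrt (sp X X))"

definition mod_dist ::
  "(('n \<Rightarrow> bicomplex) \<Rightarrow> ('n \<Rightarrow> bicomplex) \<Rightarrow> bicomplex) \<Rightarrow> ('n \<Rightarrow> bicomplex) \<Rightarrow> ('n \<Rightarrow> bicomplex) \<Rightarrow> real" where
  "mod_dist sp X Y = mod_norm sp (mod_minus X Y)"

definition is_metric :: "('a \<Rightarrow> 'a \<Rightarrow> real) \<Rightarrow> bool" where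
  "is_metric d \<longleftrightarrow>
     (\<forall>x y. d x y \<ge> 0) \<and> (\<forall>x y. d x y = 0 \<longleftrightarrow> x = y) \<and>
     (\<forall>x y. d x y = d y x) \<and> (\<forall>x y z. d x z \<le> d x y + d y z)"

end

theory Submission
  imports Defs
begin

definition P1 :: "bicomplex \<Rightarrow> complex" where "P1 w = bc1 w - \<i> * bc2 w"
definition P2 :: "bicomplex \<Rightarrow> complex" where "P2 w = bc1 w + \<i> * bc2 w"

lemma P_add: "P1 (bc_add u w) = P1 u + P1 w" "P2 (bc_add u w) = P2 u + P2 w"
  by (simp_all add: P1_def P2_def bc_add_def algebra_simps)

lemma P_mult: "P1 (bc_mult u w) = P1 u * P1 w" "P2 (bc_mult u w) = P2 u * P2 w"
  by (simp_all add: P1_def P2_def bc_mult_def algebra_simps)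

lemma P_conj: "P1 (bc_conj3 u) = cnj (P1 u)" "P2 (bc_conj3 u) = cnj (P2 u)"
  by (simp_all add: P1_def P2_def bc_conj3_def)

lemma P_zero: "P1 bc_zero = 0" "P2 bc_zero = 0"
  by (simp_all add: P1_def P2_def bc_zero_def)

lemma bc_from_P: "bc1 u = (P1 u + P2 u) / 2" "bc2 u = (P2 u - P1 u) / (2 * \<i>)"
  by (simp_all add: P1_def P2_def field_simps)

lemma P_eq: "u = w \<longleftrightarrow> P1 u = P1 w \<and> P2 u = P2 w"
proof
  assume h: "P1 u = P1 w \<and> P2 u = P2 w"
  have "bc1 u = bc1 w" "bc2 u = bc2 w" by (simp_all only: bc_from_P h)
  then show "u = w" by (rule bicomplex.expand[rotated -1, OF conjI])
qed simp

lemma P_hyp: "P1 (bc_hyp a b) = complex_of_real a" "P2 (bc_hyp a b) = complex_of_real b"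
  by (simp_all add: P1_def P2_def bc_hyp_def bc_add_def bc_mult_def bc_of_real_def bc_e1_def bc_e2_def
      algebra_simps)

lemma P_BC: "P1 (BC (complex_of_real t) 0) = t" "P2 (BC (complex_of_real t) 0) = t"
  "P1 (BC z 0) = z" "P2 (BC z 0) = z"
  by (simp_all add: P1_def P2_def)

lemma norm_hyp: "bc_norm (bc_hyp a b) = sqrt ((a\<^sup>2 + b\<^sup>2) / 2)"
proof -
  have "bc_hyp a b = BC (complex_of_real ((a+b)/2)) (\<i> * complex_of_real ((a-b)/2))"
    by (simp add: bc_hyp_def bc_add_def bc_mult_def bc_of_real_def bc_e1_def bc_e2_def complex_eq_iff)
  then have "bc_norm (bc_hyp a b) = sqrt (((a+b)/2)\<^sup>2 + ((a-b)/2)\<^sup>2)"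
    by (simp add: bc_norm_def norm_mult power_divide del: of_real_add of_real_diff of_real_divide)
  also have "((a+b)/2)\<^sup>2 + ((a-b)/2)\<^sup>2 = (a\<^sup>2 + b\<^sup>2) / 2"
    by (simp add: power2_eq_square field_simps)
  finally show ?thesis .
qed

lemma bc_norm_P: "(bc_norm u)\<^sup>2 = ((cmod (P1 u))\<^sup>2 + (cmod (P2 u))\<^sup>2) / 2"
proof -
  have "(bc_norm u)\<^sup>2 = (cmod (bc1 u))\<^sup>2 + (cmod (bc2 u))\<^sup>2"
    unfolding bc_norm_def by (simp add: add_nonneg_nonneg)
  then show ?thesis
    unfolding P1_def P2_def cmod_power2 by (simp add: power2_eq_square algebra_simps)
qed

lemma minus_eq: "mod_minus X Y = mod_add X (mod_scale (BC (-1) 0) Y)"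
  by (simp add: mod_minus_def mod_add_def mod_scale_def bc_minus_def bc_add_def bc_mult_def)

lemma minus_swap: "mod_minus Y X = mod_scale (BC (-1) 0) (mod_minus X Y)"
  by (simp add: mod_minus_def mod_scale_def bc_minus_def bc_mult_def)

lemma minus_trans: "mod_minus X Z = mod_add (mod_minus X Y) (mod_minus Y Z)"
  by (simp add: mod_minus_def mod_add_def bc_minus_def bc_add_def)

lemma minus_zero: "mod_minus X Y = mod_zero \<longleftrightarrow> X = Y"
proof
  assume "mod_minus X Y = mod_zero"
  then have "\<forall>l. bc_minus (X l) (Y l) = bc_zero" unfolding mod_minus_def mod_zero_def by metis
  then have "\<forall>l. X l = Y l" by (simp add: bc_minus_def bc_zero_def bicomplex.expand)
  then show "X = Y" by auto
qed (simp add: mod_minus_def mod_zero_def bc_minus_def bc_zero_def)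

context
  fixes sp :: "('n \<Rightarrow> bicomplex) \<Rightarrow> ('n \<Rightarrow> bicomplex) \<Rightarrow> bicomplex"
  assumes sp: "bicomplex_scalar_product sp" and hp: "hyperbolic_positive sp"
begin

lemma sp_add: "sp X (mod_add Y Z) = bc_add (sp X Y) (sp X Z)"
  using sp unfolding bicomplex_scalar_product_def by blast
lemma sp_scale: "sp X (mod_scale a Y) = bc_mult a (sp X Y)"
  using sp unfolding bicomplex_scalar_product_def by blast
lemma sp_sym: "sp X Y = bc_conj3 (sp Y X)"
  using sp unfolding bicomplex_scalar_product_def by blast
lemma sp_zero: "sp X X = bc_zero \<longleftrightarrow> X = mod_zero"
  using sp unfolding bicomplex_scalar_product_def by blast

definition A where "A X Y = P1 (sp X Y)"
definition B where "B X Y = P2 (sp X Y)"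
definition n2 where "n2 X = Re (A X X) + Re (B X X)"

lemma AB_addR: "A X (mod_add Y Z) = A X Y + A X Z" "B X (mod_add Y Z) = B X Y + B X Z"
  by (simp_all add: A_def B_def sp_add P_add)

lemma AB_scaleR: "A X (mod_scale a Y) = P1 a * A X Y" "B X (mod_scale a Y) = P2 a * B X Y"
  by (simp_all add: A_def B_def sp_scale P_mult)

lemma AB_sym: "A X Y = cnj (A Y X)" "B X Y = cnj (B Y X)"
  unfolding A_def B_def by (metis P_conj sp_sym)+

lemma AB_addL: "A (mod_add X Y) Z = A X Z + A Y Z" "B (mod_add X Y) Z = B X Z + B Y Z"
  by (metis AB_sym AB_addR complex_cnj_add)+

lemma AB_scaleL: "A (mod_scale a X) Y = cnj (P1 a) * A X Y" "B (mod_scale a X) Y = cnj (P2 a) * B X Y"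
  by (metis AB_sym AB_scaleR complex_cnj_mult)+

lemma diag: obtains a b where "a \<ge> 0" "b \<ge> 0" "sp X X = bc_hyp a b"
  using hp unfolding hyperbolic_positive_def bc_Dplus_def by blast

lemma A_diag: "A X X = complex_of_real (Re (A X X))" "Re (A X X) \<ge> 0"
  "B X X = complex_of_real (Re (B X X))" "Re (B X X) \<ge> 0"
  by (rule diag[of X], simp add: A_def B_def P_hyp)+

lemma n2_nonneg: "n2 X \<ge> 0"
  using A_diag[of X] by (simp add: n2_def)

lemma norm_n2: "mod_norm sp X = sqrt (n2 X / 2)"
proof -
  obtain a b where ab: "a \<ge> 0" "b \<ge> 0" "sp X X = bc_hyp a b" by (rule diag)
  have "bc_Dsqrt (sp X X) = bc_hyp (sqrt a) (sqrt b)"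
    unfolding bc_Dsqrt_def
  proof (rule the_equality)
    show "\<exists>a' b'. a' \<ge> 0 \<and> b' \<ge> 0 \<and> sp X X = bc_hyp a' b' \<and> bc_hyp (sqrt a) (sqrt b) = bc_hyp (sqrt a') (sqrt b')"
      using ab by blast
  next
    fix s assume "\<exists>a' b'. a' \<ge> 0 \<and> b' \<ge> 0 \<and> sp X X = bc_hyp a' b' \<and> s = bc_hyp (sqrt a') (sqrt b')"
    then obtain a' b' where "sp X X = bc_hyp a' b'" "s = bc_hyp (sqrt a') (sqrt b')" by blast
    moreover then have "a' = a" "b' = b" using ab(3) P_hyp
      by (metis of_real_eq_iff)+
    ultimately show "s = bc_hyp (sqrt a) (sqrt b)" by simp
  qed
  moreover have "n2 X = a + b" using ab by (simp add: n2_def A_def B_def P_hyp)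
  ultimately show ?thesis using ab by (simp add: mod_norm_def norm_hyp)
qed

lemma n2_add: "n2 (mod_add X Y) = n2 X + n2 Y + 2 * (Re (A X Y) + Re (B X Y))"
proof -
  have "Re (A Y X) = Re (A X Y)" "Re (B Y X) = Re (B X Y)" using AB_sym[of Y X] by simp_all
  then show ?thesis by (simp add: n2_def AB_addL AB_addR)
qed

lemma n2_scale: "n2 (mod_scale a X) = (cmod (P1 a))\<^sup>2 * Re (A X X) + (cmod (P2 a))\<^sup>2 * Re (B X X)"
proof -
  have h: "z * (cnj z * w) = complex_of_real ((cmod z)\<^sup>2) * w" for z w
  proof -
    have "cnj z * z = complex_of_real ((cmod z)\<^sup>2)"
      using complex_norm_square[of z] by (simp add: mult.commute)
    then show ?thesis by (metis mult.assoc mult.commute)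
  qed
  have "A (mod_scale a X) (mod_scale a X) = complex_of_real ((cmod (P1 a))\<^sup>2) * A X X"
       "B (mod_scale a X) (mod_scale a X) = complex_of_real ((cmod (P2 a))\<^sup>2) * B X X"
    by (simp_all only: AB_scaleL AB_scaleR h)
  then show ?thesis by (simp add: n2_def)
qed

lemma n2_zero: "n2 X = 0 \<longleftrightarrow> X = mod_zero"
proof
  assume "n2 X = 0"
  then have "Re (A X X) = 0" "Re (B X X) = 0" using A_diag[of X] by (simp_all add: n2_def)
  then have "A X X = 0" "B X X = 0" using A_diag[of X] by simp_all
  then have "sp X X = bc_zero" by (simp add: P_eq P_zero A_def B_def)
  then show "X = mod_zero" using sp_zero by simp
next
  assume "X = mod_zero"
  then have "sp X X = bc_zero" using sp_zero by simp
  then show "n2 X = 0" by (simp add: n2_def A_def B_def P_zero)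
qed

lemma CS: "(Re (A X Y) + Re (B X Y))\<^sup>2 \<le> n2 X * n2 Y"
proof -
  define r where "r = Re (A X Y) + Re (B X Y)"
  have q: "0 \<le> n2 X + 2 * t * r + t\<^sup>2 * n2 Y" for t
  proof -
    have "0 \<le> n2 (mod_add X (mod_scale (BC (complex_of_real t) 0) Y))" by (rule n2_nonneg)
    also have "\<dots> = n2 X + n2 (mod_scale (BC (complex_of_real t) 0) Y)
       + 2 * (Re (A X (mod_scale (BC (complex_of_real t) 0) Y)) + Re (B X (mod_scale (BC (complex_of_real t) 0) Y)))"
      by (rule n2_add)
    also have "\<dots> = n2 X + 2 * t * r + t\<^sup>2 * n2 Y"
      unfolding n2_scale AB_scaleR P_BC by (simp add: r_def n2_def[of Y] algebra_simps)
    finally show ?thesis .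
  qed
  show ?thesis
  proof (cases "n2 Y = 0")
    case True
    have "r = 0"
    proof (rule ccontr)
      assume "r \<noteq> 0"
      have "0 \<le> n2 X + 2 * (- (n2 X + 1) / (2 * r)) * r" using q[of "- (n2 X + 1) / (2 * r)"] True by simp
      also have "\<dots> = -1" using \<open>r \<noteq> 0\<close> by (simp add: field_simps)
      finally show False by simp
    qed
    then show ?thesis using True by (simp add: r_def)
  next
    case False
    then have pos: "n2 Y > 0" using n2_nonneg[of Y] by simp
    have "0 \<le> n2 X + 2 * (- r / n2 Y) * r + (- r / n2 Y)\<^sup>2 * n2 Y" by (rule q)
    also have "\<dots> = n2 X - r\<^sup>2 / n2 Y" using pos by (simp add: field_simps power2_eq_square)
    finally have "r\<^sup>2 / n2 Y \<le> n2 X" by simp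
    then have "r\<^sup>2 \<le> n2 X * n2 Y" using pos by (simp add: divide_le_eq)
    then show ?thesis by (simp add: r_def)
  qed
qed

lemma triangle: "mod_norm sp (mod_add X Y) \<le> mod_norm sp X + mod_norm sp Y"
proof -
  define r where "r = Re (A X Y) + Re (B X Y)"
  have r: "r \<le> sqrt (n2 X) * sqrt (n2 Y)"
  proof -
    have "r \<le> \<bar>r\<bar>" by simp
    also have "\<bar>r\<bar> = sqrt (r\<^sup>2)" by simp
    also have "\<dots> \<le> sqrt (n2 X * n2 Y)" using real_sqrt_le_mono[OF CS[of X Y]] unfolding r_def .
    finally show ?thesis by (simp add: real_sqrt_mult)
  qed
  have "n2 (mod_add X Y) \<le> (sqrt (n2 X) + sqrt (n2 Y))\<^sup>2"
    using r n2_nonneg[of X] n2_nonneg[of Y]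
    by (simp add: n2_add r_def power2_eq_square algebra_simps)
  then have "sqrt (n2 (mod_add X Y)) \<le> sqrt (n2 X) + sqrt (n2 Y)"
    by (metis real_le_rsqrt real_sqrt_ge_zero n2_nonneg add_nonneg_nonneg real_sqrt_le_mono real_sqrt_abs abs_of_nonneg)
  then have "sqrt (n2 (mod_add X Y)) / sqrt 2 \<le> sqrt (n2 X) / sqrt 2 + sqrt (n2 Y) / sqrt 2"
    by (simp add: add_divide_distrib[symmetric] divide_right_mono)
  then show ?thesis by (simp add: norm_n2 real_sqrt_divide)
qed

lemma norm_scale_eq: assumes "cmod (P1 a) = c" "cmod (P2 a) = c"
  shows "mod_norm sp (mod_scale a X) = c * mod_norm sp X"
proof -
  have c: "c \<ge> 0" using assms by auto
  have "n2 (mod_scale a X) / 2 = c\<^sup>2 * (n2 X / 2)" unfolding n2_scale using assms by (simp add: n2_def[of X] algebra_simps)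
  moreover have "sqrt (c\<^sup>2 * (n2 X / 2)) = c * sqrt (n2 X / 2)"
    by (subst real_sqrt_mult) (simp add: c)
  ultimately have "sqrt (n2 (mod_scale a X) / 2) = c * sqrt (n2 X / 2)" by simp
  then show ?thesis using c by (simp add: norm_n2)
qed

lemma norm_scale_le: "mod_norm sp (mod_scale a X) \<le> sqrt 2 * bc_norm a * mod_norm sp X"
proof -
  have e: "2 * (bc_norm a)\<^sup>2 = (cmod (P1 a))\<^sup>2 + (cmod (P2 a))\<^sup>2" using bc_norm_P[of a] by simp
  have h1: "(cmod (P1 a))\<^sup>2 \<le> 2 * (bc_norm a)\<^sup>2"
    using e zero_le_power2[of "cmod (P2 a)"] by linarith
  have h2: "(cmod (P2 a))\<^sup>2 \<le> 2 * (bc_norm a)\<^sup>2"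
    using e zero_le_power2[of "cmod (P1 a)"] by linarith
  note h = h1 h2
  have "n2 (mod_scale a X) \<le> 2 * (bc_norm a)\<^sup>2 * Re (A X X) + 2 * (bc_norm a)\<^sup>2 * Re (B X X)"
    unfolding n2_scale using A_diag[of X] h by (intro add_mono mult_right_mono) auto
  then have "n2 (mod_scale a X) / 2 \<le> (sqrt 2 * bc_norm a)\<^sup>2 * (n2 X / 2)"
    by (simp add: n2_def[of X] power_mult_distrib algebra_simps)
  then have "sqrt (n2 (mod_scale a X) / 2) \<le> sqrt ((sqrt 2 * bc_norm a)\<^sup>2 * (n2 X / 2))"
    using real_sqrt_le_mono by blast
  also have "\<dots> = sqrt 2 * bc_norm a * sqrt (n2 X / 2)"
    by (subst real_sqrt_mult) (simp add: bc_norm_def)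
  finally show ?thesis by (simp add: norm_n2)
qed

end

theorem mainTheorem10:
  fixes sp :: "('n::finite \<Rightarrow> bicomplex) \<Rightarrow> ('n \<Rightarrow> bicomplex) \<Rightarrow> bicomplex"
  assumes "bicomplex_scalar_product sp"
    and "hyperbolic_positive sp"
    and "closed_on_V sp"
  shows "(\<forall>X. mod_norm sp X \<ge> 0)
    \<and> (\<forall>X. mod_norm sp X = 0 \<longleftrightarrow> X = mod_zero)
    \<and> (\<forall>X z. mod_norm sp (mod_scale (BC z 0) X) = cmod z * mod_norm sp X)
    \<and> (\<forall>X (x::real) (y::real). mod_norm sp (mod_scale (BC (complex_of_real x) (complex_of_real y)) X)
          = sqrt (x\<^sup>2 + y\<^sup>2) * mod_norm sp X)
    \<and> (\<forall>X \<alpha>. mod_norm sp (mod_scale \<alpha> X) \<le> sqrt 2 * bc_norm \<alpha> * mod_norm sp X)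
    \<and> (\<forall>X Y. mod_norm sp (mod_add X Y) \<le> mod_norm sp X + mod_norm sp Y)
    \<and> is_metric (mod_dist sp)"
proof -
  note s = assms(1,2)
  have nn: "mod_norm sp X \<ge> 0" for X using n2_nonneg[OF s, of X] by (simp add: norm_n2[OF s])
  have z: "mod_norm sp X = 0 \<longleftrightarrow> X = mod_zero" for X
    using n2_zero[OF s, of X] n2_nonneg[OF s, of X] by (simp add: norm_n2[OF s])
  have c: "mod_norm sp (mod_scale (BC w 0) X) = cmod w * mod_norm sp X" for X w
    by (rule norm_scale_eq[OF s]) (simp_all add: P_BC)
  have r: "mod_norm sp (mod_scale (BC (complex_of_real x) (complex_of_real y)) X)
          = sqrt (x\<^sup>2 + y\<^sup>2) * mod_norm sp X" for X x y
    by (rule norm_scale_eq[OF s]) (simp_all add: P1_def P2_def cmod_def)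
  have sym: "mod_dist sp X Y = mod_dist sp Y X" for X Y
    unfolding mod_dist_def minus_swap[of X Y] using c[of "-1"] by simp
  have tri: "mod_dist sp X Z \<le> mod_dist sp X Y + mod_dist sp Y Z" for X Y Z
    unfolding mod_dist_def minus_trans[of X Z Y] by (rule triangle[OF s])
  have nn': "mod_dist sp X Y \<ge> 0" for X Y unfolding mod_dist_def by (rule nn)
  have z': "mod_dist sp X Y = 0 \<longleftrightarrow> X = Y" for X Y unfolding mod_dist_def using z minus_zero by simp
  have "is_metric (mod_dist sp)"
    unfolding is_metric_def using nn' z' sym tri by blast
  then show ?thesis using nn z c r norm_scale_le[OF s] triangle[OF s] by blast
qed

end
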